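(* For any locale $L$, the subset $M_L:=\bigcap_{a\in L}\mathfrak{o}(a^*\vee a^{**})$ is a dense extremally disconnected sublocale of $L$, and every dense extremally disconnected sublocale $S$ of $L$ satisfies $S\subseteq M_L$; i.e. $M_L$ is the largest dense extremally disconnected sublocale of $L$.
   Context: A frame (locale) $L$ is a complete lattice in which finite meets distribute over arbitrary joins; $a\to b$ denotes the Heyting implication and $a^*=a\to0$ the pseudocomplement. A sublocale of $L$ is a subset $S\subseteq L$ closed under arbitrary meets such that $a\to s\in S$ for all $a\in L$, $s\in S$; it is a frame under the inherited order. The open sublocale of $a\in L$ is $\mathfrak{o}(a)=\{a\to b\mid b\in L\}$. A sublocale $S$ is dense if $\bigwedge S=0$. A locale (frame) is extremally disconnected if $x^*\vee x^{**}=1$ for all its elements $x$ (pseudocomplements and joins computed in that frame). *)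

theory Defs
  imports Main
begin

definition frame_law :: "'a::complete_lattice itself \<Rightarrow> bool" where
  "frame_law _ \<longleftrightarrow> (\<forall>(a::'a) T. inf a (Sup T) = (SUP t\<in>T. inf a t))"

definition himp :: "'a::complete_lattice \<Rightarrow> 'a \<Rightarrow> 'a" where
  "himp a b = Sup {x. inf x a \<le> b}"

definition pcompl :: "'a::complete_lattice \<Rightarrow> 'a" where
  "pcompl a = himp a bot"

definition sublocale_of :: "'a::complete_lattice set \<Rightarrow> bool" where
  "sublocale_of S \<longleftrightarrow> (\<forall>T. T \<subseteq> S \<longrightarrow> Inf T \<in> S) \<and> (\<forall>a. \<forall>s\<in>S. himp a s \<in> S)"

definition open_sub :: "'a::complete_lattice \<Rightarrow> 'a set" where
  "open_sub a = {himp a b | b. True}"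

definition dense_sub :: "'a::complete_lattice set \<Rightarrow> bool" where
  "dense_sub S \<longleftrightarrow> Inf S = bot"

text \<open>Lattice operations of a subset S under the inherited order (meaningful for sublocales):
  joins, bottom, pseudocomplement computed in S.\<close>
definition sub_join :: "'a::complete_lattice set \<Rightarrow> 'a set \<Rightarrow> 'a" where
  "sub_join S T = Inf {s\<in>S. \<forall>t\<in>T. t \<le> s}"

definition sub_bot :: "'a::complete_lattice set \<Rightarrow> 'a" where
  "sub_bot S = Inf S"

definition sub_top :: "'a::complete_lattice set \<Rightarrow> 'a" where
  "sub_top S = sub_join S S"

definition sub_pcompl :: "'a::complete_lattice set \<Rightarrow> 'a \<Rightarrow> 'a" where
  "sub_pcompl S x = sub_join S {y\<in>S. inf y x = sub_bot S}"

definition ext_disconnected_sub :: "'a::complete_lattice set \<Rightarrow> bool" where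
  "ext_disconnected_sub S \<longleftrightarrow>
     (\<forall>x\<in>S. sub_join S {sub_pcompl S x, sub_pcompl S (sub_pcompl S x)} = sub_top S)"

definition M_L :: "'a::complete_lattice set" where
  "M_L = (\<Inter>a. open_sub (sup (pcompl a) (pcompl (pcompl a))))"

end

theory Submission
  imports Defs
begin

lemma himp_iff:
  assumes F: "frame_law TYPE('a::complete_lattice)"
  shows "((x::'a) \<le> himp a b) \<longleftrightarrow> (inf x a \<le> b)"
proof
  assume "inf x a \<le> b" then show "x \<le> himp a b" unfolding himp_def by (auto intro: Sup_upper)
next
  assume h: "x \<le> himp a b"
  have "inf x a \<le> inf a (himp a b)" using h by (simp add: le_infI1 le_infI2 inf_commute)
  also have "\<dots> = (SUP t\<in>{x. inf x a \<le> b}. inf a t)"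
    using F unfolding frame_law_def himp_def by blast
  also have "\<dots> \<le> b" by (auto intro!: SUP_least simp: inf_commute)
  finally show "inf x a \<le> b" .
qed

lemma eq_le: "(\<And>x. (x::'a::order) \<le> p \<longleftrightarrow> x \<le> q) \<Longrightarrow> p = q"
  by (meson order.refl antisym)

context
  fixes F :: bool
  assumes F: "frame_law TYPE('a::complete_lattice)"
begin

lemma hi: "((x::'a) \<le> himp a b) \<longleftrightarrow> (inf x a \<le> b)"
  using himp_iff[OF F] .

lemma himp_mp: "inf (himp a b) a \<le> (b::'a)"
  using hi by blast

lemma himp_ge: "(b::'a) \<le> himp a b"
  using hi by (simp add: le_infI1)

lemma himp_top: "(himp a b = (top::'a)) \<longleftrightarrow> a \<le> b"
  using hi[of top a b] by (simp add: top_unique)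

lemma himp_idem: "himp c (himp c b) = himp c (b::'a)"
  by (rule eq_le) (simp add: hi inf_assoc)

lemma himp_comm: "himp a (himp c b) = himp c (himp a (b::'a))"
  by (rule eq_le) (simp add: hi inf_assoc inf_commute inf_left_commute)

lemma himp_Inf: "himp c (Inf B) = Inf (himp c ` (B::'a set))"
  by (rule eq_le) (simp add: hi le_Inf_iff)

lemma himp_anti: "(a::'a) \<le> a' \<Longrightarrow> himp a' b \<le> himp a b"
  using hi by (metis himp_mp inf_mono order.refl order_trans)

lemma pc_le: "((x::'a) \<le> pcompl a) \<longleftrightarrow> inf x a = bot"
  unfolding pcompl_def by (simp add: hi bot_unique)

lemma pc3: "pcompl (pcompl (pcompl (a::'a))) = pcompl a"
  by (rule eq_le) (metis pc_le inf_commute order.refl le_infI2 inf_le1 inf_le2 antisym bot_least order_trans)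

lemma pc_dense: "pcompl (sup (pcompl a) (pcompl (pcompl (a::'a)))) = bot"
proof -
  let ?p = "pcompl (sup (pcompl a) (pcompl (pcompl a)))"
  have "inf ?p (sup (pcompl a) (pcompl (pcompl a))) = bot" using pc_le[of ?p "sup (pcompl a) (pcompl (pcompl a))"] by simp
  then have "inf ?p (pcompl a) = bot" "inf ?p (pcompl (pcompl a)) = bot"
    by (metis bot_unique inf_mono order.refl sup_ge1 sup_ge2)+
  then have "?p \<le> pcompl (pcompl a)" "?p \<le> pcompl a"
    using pc_le[of ?p "pcompl a"] pc_le[of ?p "pcompl (pcompl a)"] pc3 by simp_all
  then have "?p \<le> inf (pcompl (pcompl a)) (pcompl a)" by simp
  also have "\<dots> = bot" using pc_le[of "pcompl (pcompl a)" "pcompl a"] by simp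
  finally show ?thesis by (simp add: bot_unique)
qed

lemma open_sub_iff: "((s::'a) \<in> open_sub c) \<longleftrightarrow> himp c s = s"
  unfolding open_sub_def using himp_idem by (auto, metis)

lemma sub_join_eq:
  assumes "m \<in> S" "\<forall>t\<in>T. t \<le> m" "\<forall>s\<in>S. (\<forall>t\<in>T. t \<le> s) \<longrightarrow> m \<le> (s::'a)"
  shows "sub_join S T = m"
  unfolding sub_join_def using assms by (auto intro!: antisym Inf_lower Inf_greatest)

lemma sub_basics:
  assumes "sublocale_of (S::'a set)" "dense_sub S"
  shows "bot \<in> S" "top \<in> S" "sub_top S = top"
    "\<And>x. x \<in> S \<Longrightarrow> pcompl x \<in> S" "\<And>x. x \<in> S \<Longrightarrow> sub_pcompl S x = pcompl x"
proof -
  have b: "Inf S = bot" using assms(2) unfolding dense_sub_def .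
  show bS: "bot \<in> S" using assms(1) b unfolding sublocale_of_def by (metis order.refl)
  show tS: "top \<in> S" using assms(1) unfolding sublocale_of_def by (metis Inf_empty empty_subsetI)
  show "sub_top S = top" unfolding sub_top_def by (rule sub_join_eq) (use tS in auto)
  show pS: "\<And>x. x \<in> S \<Longrightarrow> pcompl x \<in> S" using assms(1) bS unfolding sublocale_of_def pcompl_def by blast
  show "sub_pcompl S x = pcompl x" if x: "x \<in> S" for x
    unfolding sub_pcompl_def sub_bot_def b
  proof (rule sub_join_eq)
    have i: "inf (pcompl x) x = bot" using pc_le[of "pcompl x" x] by simp
    show "pcompl x \<in> S" using pS[OF x] .
    show "\<forall>t\<in>{y \<in> S. inf y x = bot}. t \<le> pcompl x" using pc_le[of _ x] by simp
    show "\<forall>s\<in>S. (\<forall>t\<in>{y \<in> S. inf y x = bot}. t \<le> s) \<longrightarrow> pcompl x \<le> s"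
      using pS[OF x] i by auto
  qed
qed

end

theorem proposition4p2:
  assumes "frame_law TYPE('a::complete_lattice)"
  shows "sublocale_of (M_L :: 'a set) \<and> dense_sub (M_L :: 'a set) \<and> ext_disconnected_sub (M_L :: 'a set)
    \<and> (\<forall>S::'a set. sublocale_of S \<and> dense_sub S \<and> ext_disconnected_sub S \<longrightarrow> S \<subseteq> M_L)"
proof -
  note F = assms
  have inML: "(s \<in> (M_L::'a set)) \<longleftrightarrow> (\<forall>a::'a. himp (sup (pcompl a) (pcompl (pcompl a))) s = s)" for s
    unfolding M_L_def using open_sub_iff[OF F] by blast
  have sub: "sublocale_of (M_L :: 'a set)"
    unfolding sublocale_of_def
  proof (intro conjI allI impI ballI)
    fix T :: "'a set" assume "T \<subseteq> M_L"
    then have "\<forall>t\<in>T. himp (sup (pcompl a) (pcompl (pcompl a))) t = t" for a using inML by blast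
    then have "(INF t\<in>T. himp (sup (pcompl a) (pcompl (pcompl a))) t) = (INF t\<in>T. t)" for a
      by (intro INF_cong) auto
    then show "Inf T \<in> M_L" unfolding inML using himp_Inf[OF F] by simp
  next
    fix a s :: 'a assume "s \<in> M_L"
    then show "himp a s \<in> M_L" unfolding inML using himp_comm[OF F] by metis
  qed
  have bM: "(bot::'a) \<in> M_L" unfolding inML using pc_dense[OF F] unfolding pcompl_def by simp
  have den: "dense_sub (M_L :: 'a set)" unfolding dense_sub_def using Inf_lower[OF bM] bot_unique by blast
  note B = sub_basics[OF F sub den]
  have ed: "ext_disconnected_sub (M_L :: 'a set)"
    unfolding ext_disconnected_sub_def
  proof
    fix x :: 'a assume x: "x \<in> M_L"
    have "sub_join M_L {pcompl x, pcompl (pcompl x)} = top"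
    proof (rule sub_join_eq[OF F])
      show "(top::'a) \<in> M_L" using B(2) .
      show "\<forall>t\<in>{pcompl x, pcompl (pcompl x)}. t \<le> top" by simp
      show "\<forall>s\<in>M_L. (\<forall>t\<in>{pcompl x, pcompl (pcompl x)}. t \<le> s) \<longrightarrow> top \<le> s"
      proof (intro ballI impI)
        fix s :: 'a assume s: "s \<in> M_L" and "\<forall>t\<in>{pcompl x, pcompl (pcompl x)}. t \<le> s"
        then have "sup (pcompl x) (pcompl (pcompl x)) \<le> s" by simp
        then have "himp (sup (pcompl x) (pcompl (pcompl x))) s = top" using himp_top[OF F] by blast
        then show "top \<le> s" using s unfolding inML by (metis order.refl)
      qed
    qed
    then show "sub_join M_L {sub_pcompl M_L x, sub_pcompl M_L (sub_pcompl M_L x)} = sub_top M_L"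
      using B x by simp
  qed
  have lar: "S \<subseteq> M_L" if S: "sublocale_of S" "dense_sub S" "ext_disconnected_sub S" for S :: "'a set"
  proof
    note C = sub_basics[OF F S(1,2)]
    fix s assume s: "s \<in> S"
    show "s \<in> M_L" unfolding inML
    proof
      fix a :: 'a
      let ?c = "sup (pcompl a) (pcompl (pcompl a))"
      have pS: "pcompl b \<in> S" for b using S(1) C(1) unfolding sublocale_of_def pcompl_def by blast
      have x: "pcompl (pcompl a) \<in> S" by (rule pS)
      have j0: "sub_join S {sub_pcompl S (pcompl (pcompl a)), sub_pcompl S (sub_pcompl S (pcompl (pcompl a)))} = sub_top S"
        using S(3) x unfolding ext_disconnected_sub_def by blast
      have e1: "sub_pcompl S (pcompl (pcompl a)) = pcompl a" using C(5)[OF x] pc3[OF F] by simp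
      have e2: "sub_pcompl S (pcompl a) = pcompl (pcompl a)" using C(5)[OF pS] .
      have j: "sub_join S {pcompl a, pcompl (pcompl a)} = top"
        using j0 unfolding e1 e2 C(3) .
      let ?t = "himp ?c s"
      have tS: "?t \<in> S" using S(1) s unfolding sublocale_of_def by blast
      have uS: "himp ?t s \<in> S" using S(1) s unfolding sublocale_of_def by blast
      have "inf ?c ?t \<le> s" using himp_mp[OF F, of ?c s] by (simp add: inf_commute)
      then have "?c \<le> himp ?t s" using himp_iff[OF F] by blast
      then have "himp ?t s \<in> {u \<in> S. \<forall>t\<in>{pcompl a, pcompl (pcompl a)}. t \<le> u}" using uS by simp
      then have "sub_join S {pcompl a, pcompl (pcompl a)} \<le> himp ?t s" unfolding sub_join_def by (rule Inf_lower)
      then have "top \<le> himp ?t s" using j by simp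
      then have "?t \<le> s" using himp_top[OF F, of ?t s] top_unique[of "himp ?t s"] by blast
      then show "?t = s" using himp_ge[OF F] antisym by blast
    qed
  qed
  show ?thesis using sub den ed lar by blast
qed

end
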